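(* Let $G$ and $H$ be graphs. (i) If $*\in\{\Box,\times,\boxtimes\}$ (Cartesian, direct, or strong product), then $\chi_{\mathrm{so}}(G*H)\leq \chi_{\mathrm{so}}(G)\,\chi_{\mathrm{so}}(H)$. (ii) For the lexicographic product, $\chi_{\mathrm{so}}(G\circ H)\leq \chi_{\mathrm{so}}(G)\,(\chi_{\mathrm{so}}(H+K_1)-1)$.
   Context: All graphs are finite, simple and undirected. A strong odd coloring of a graph $G$ is a proper vertex coloring of $G$ such that for every non-isolated vertex $v$ and every color $c$, either no vertex of the open neighborhood $N_G(v)$ has color $c$, or color $c$ is used on an odd number of vertices of $N_G(v)$; $\chi_{\mathrm{so}}(G)$ is the minimum number of colors in such a coloring. $H+K_1$ denotes the graph obtained from $H$ by adding a new vertex adjacent to all vertices of $H$. All products have vertex set $V_G\times V_H$. Cartesian product $G\Box H$: $(g,h)(g',h')$ is an edge iff ($g=g'$ and $hh'\in E_H$) or ($gg'\in E_G$ and $h=h'$). Direct product $G\times H$: edge iff $gg'\in E_G$ and $hh'\in E_H$. Strong product $G\boxtimes H$: edge iff $(g,h)\neq(g',h')$, $g'\in N[g]$ and $h'\in N[h]$ (closed neighborhoods). Lexicographic product $G\circ H$: edge iff $gg'\in E_G$, or ($g=g'$ and $hh'\in E_H$). *)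

theory Defs
  imports Main
begin

definition graph :: "'a set \<Rightarrow> ('a \<Rightarrow> 'a \<Rightarrow> bool) \<Rightarrow> bool" where
  "graph V E \<longleftrightarrow> finite V \<and> (\<forall>x y. E x y \<longrightarrow> x \<in> V \<and> y \<in> V)
     \<and> (\<forall>x y. E x y \<longrightarrow> E y x) \<and> (\<forall>x. \<not> E x x)"

definition nbhd :: "'a set \<Rightarrow> ('a \<Rightarrow> 'a \<Rightarrow> bool) \<Rightarrow> 'a \<Rightarrow> 'a set" where
  "nbhd V E v = {u \<in> V. E v u}"

definition strong_odd_coloring :: "'a set \<Rightarrow> ('a \<Rightarrow> 'a \<Rightarrow> bool) \<Rightarrow> ('a \<Rightarrow> nat) \<Rightarrow> bool" where
  "strong_odd_coloring V E f \<longleftrightarrow>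
     (\<forall>u\<in>V. \<forall>v\<in>V. E u v \<longrightarrow> f u \<noteq> f v) \<and>
     (\<forall>v\<in>V. nbhd V E v \<noteq> {} \<longrightarrow>
        (\<forall>c. card {u \<in> nbhd V E v. f u = c} = 0 \<or> odd (card {u \<in> nbhd V E v. f u = c})))"

definition chi_so :: "'a set \<Rightarrow> ('a \<Rightarrow> 'a \<Rightarrow> bool) \<Rightarrow> nat" where
  "chi_so V E = (LEAST k. \<exists>f. strong_odd_coloring V E f \<and> f ` V \<subseteq> {..<k})"

definition cart_prod_E :: "'a set \<Rightarrow> ('a \<Rightarrow> 'a \<Rightarrow> bool) \<Rightarrow> 'b set \<Rightarrow> ('b \<Rightarrow> 'b \<Rightarrow> bool)
    \<Rightarrow> ('a \<times> 'b) \<Rightarrow> ('a \<times> 'b) \<Rightarrow> bool" where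
  "cart_prod_E VG EG VH EH = (\<lambda>(g,h) (g',h'). g \<in> VG \<and> g' \<in> VG \<and> h \<in> VH \<and> h' \<in> VH \<and>
      ((g = g' \<and> EH h h') \<or> (EG g g' \<and> h = h')))"

definition direct_prod_E :: "'a set \<Rightarrow> ('a \<Rightarrow> 'a \<Rightarrow> bool) \<Rightarrow> 'b set \<Rightarrow> ('b \<Rightarrow> 'b \<Rightarrow> bool)
    \<Rightarrow> ('a \<times> 'b) \<Rightarrow> ('a \<times> 'b) \<Rightarrow> bool" where
  "direct_prod_E VG EG VH EH = (\<lambda>(g,h) (g',h'). g \<in> VG \<and> g' \<in> VG \<and> h \<in> VH \<and> h' \<in> VH \<and>
      EG g g' \<and> EH h h')"

definition strong_prod_E :: "'a set \<Rightarrow> ('a \<Rightarrow> 'a \<Rightarrow> bool) \<Rightarrow> 'b set \<Rightarrow> ('b \<Rightarrow> 'b \<Rightarrow> bool)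
    \<Rightarrow> ('a \<times> 'b) \<Rightarrow> ('a \<times> 'b) \<Rightarrow> bool" where
  "strong_prod_E VG EG VH EH = (\<lambda>(g,h) (g',h'). g \<in> VG \<and> g' \<in> VG \<and> h \<in> VH \<and> h' \<in> VH \<and>
      (g,h) \<noteq> (g',h') \<and> (g' = g \<or> EG g g') \<and> (h' = h \<or> EH h h'))"

definition lex_prod_E :: "'a set \<Rightarrow> ('a \<Rightarrow> 'a \<Rightarrow> bool) \<Rightarrow> 'b set \<Rightarrow> ('b \<Rightarrow> 'b \<Rightarrow> bool)
    \<Rightarrow> ('a \<times> 'b) \<Rightarrow> ('a \<times> 'b) \<Rightarrow> bool" where
  "lex_prod_E VG EG VH EH = (\<lambda>(g,h) (g',h'). g \<in> VG \<and> g' \<in> VG \<and> h \<in> VH \<and> h' \<in> VH \<and>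
      (EG g g' \<or> (g = g' \<and> EH h h')))"

text \<open>H + K_1: new vertex None adjacent to every (Some) vertex of H.\<close>
definition cone_V :: "'b set \<Rightarrow> 'b option set" where
  "cone_V V = insert None (Some ` V)"

fun cone_E :: "'b set \<Rightarrow> ('b \<Rightarrow> 'b \<Rightarrow> bool) \<Rightarrow> 'b option \<Rightarrow> 'b option \<Rightarrow> bool" where
  "cone_E V E (Some x) (Some y) = E x y"
| "cone_E V E None (Some y) = (y \<in> V)"
| "cone_E V E (Some x) None = (x \<in> V)"
| "cone_E V E None None = False"

end

theory Submission
  imports Defs
begin

definition oddc :: "'a set \<Rightarrow> ('a \<Rightarrow> nat) \<Rightarrow> bool" where
  "oddc S f \<longleftrightarrow> (\<forall>c. card {u\<in>S. f u = c} = 0 \<or> odd (card {u\<in>S. f u = c}))"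

lemma soc_iff:
  "strong_odd_coloring V E f \<longleftrightarrow>
     (\<forall>u\<in>V. \<forall>v\<in>V. E u v \<longrightarrow> f u \<noteq> f v) \<and> (\<forall>v\<in>V. oddc (nbhd V E v) f)"
proof
  assume H: "strong_odd_coloring V E f"
  have "oddc (nbhd V E v) f" if v: "v \<in> V" for v
  proof (cases "nbhd V E v = {}")
    case True then show ?thesis unfolding oddc_def by simp
  next
    case False then show ?thesis using H v unfolding oddc_def strong_odd_coloring_def by blast
  qed
  then show "(\<forall>u\<in>V. \<forall>v\<in>V. E u v \<longrightarrow> f u \<noteq> f v) \<and> (\<forall>v\<in>V. oddc (nbhd V E v) f)"
    using H unfolding strong_odd_coloring_def by blast
next
  assume "(\<forall>u\<in>V. \<forall>v\<in>V. E u v \<longrightarrow> f u \<noteq> f v) \<and> (\<forall>v\<in>V. oddc (nbhd V E v) f)"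
  then show "strong_odd_coloring V E f" unfolding strong_odd_coloring_def oddc_def by blast
qed

lemma chi_le:
  assumes "strong_odd_coloring V E f" "f ` V \<subseteq> {..<k}"
  shows "chi_so V E \<le> k"
  unfolding chi_so_def using assms by (intro Least_le) blast

lemma oddc_single: "oddc {x} f"
  unfolding oddc_def
proof
  fix c
  have "{u\<in>{x}. f u = c} = {} \<or> {u\<in>{x}. f u = c} = {x}" by auto
  then show "card {u\<in>{x}. f u = c} = 0 \<or> odd (card {u\<in>{x}. f u = c})" by auto
qed

lemma chi_ex:
  assumes "graph V E"
  shows "\<exists>f. strong_odd_coloring V E f \<and> f ` V \<subseteq> {..<chi_so V E}"
proof -
  have fin: "finite V" using assms unfolding graph_def by auto
  obtain f :: "'a \<Rightarrow> nat" and n where fn: "f ` V = {i. i < n}" "inj_on f V"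
    using finite_imp_inj_to_nat_seg[OF fin] by blast
  have "strong_odd_coloring V E f"
    unfolding soc_iff
  proof (intro conjI ballI impI)
    fix u v assume "u \<in> V" "v \<in> V" "E u v"
    then show "f u \<noteq> f v" using assms fn(2) unfolding graph_def inj_on_def by metis
  next
    fix v assume "v \<in> V"
    show "oddc (nbhd V E v) f" unfolding oddc_def
    proof
      fix c
      show "card {u\<in>nbhd V E v. f u = c} = 0 \<or> odd (card {u\<in>nbhd V E v. f u = c})"
      proof (cases "{u\<in>nbhd V E v. f u = c} = {}")
        case True then show ?thesis by (simp add: True)
      next
        case False
        then obtain w where w: "w \<in> nbhd V E v" "f w = c" by auto
        have "{u\<in>nbhd V E v. f u = c} = {w}"
          using w fn(2) unfolding nbhd_def inj_on_def by auto
        then show ?thesis by simp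
      qed
    qed
  qed
  moreover have "f ` V \<subseteq> {..<n}" using fn by auto
  ultimately have "\<exists>k f. strong_odd_coloring V E f \<and> f ` V \<subseteq> {..<k}" by blast
  then show ?thesis unfolding chi_so_def by (rule LeastI_ex)
qed

lemma enc_eq:
  fixes x y b c :: nat
  assumes "y < b"
  shows "(x * b + y = c) \<longleftrightarrow> (x = c div b \<and> y = c mod b)"
proof
  assume "x * b + y = c" then show "x = c div b \<and> y = c mod b" using assms by auto
next
  assume "x = c div b \<and> y = c mod b" then show "x * b + y = c" by simp
qed

lemma enc_lt:
  fixes x y a b :: nat
  assumes "x < a" "y < b"
  shows "x * b + y < a * b"
proof -
  have "x * b + y < x * b + b" using assms by simp
  also have "\<dots> = (x + 1) * b" by simp
  also have "\<dots> \<le> a * b" using assms by (intro mult_right_mono) auto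
  finally show ?thesis .
qed


lemma oddc_prod:
  assumes "oddc A f" "oddc B g" "g ` B \<subseteq> {..<b}"
  shows "oddc (A \<times> B) (\<lambda>(x,y). f x * b + g y)"
  unfolding oddc_def
proof
  fix c
  have k: "(f x * b + g y = c) \<longleftrightarrow> (f x = c div b \<and> g y = c mod b)" if "y \<in> B" for x y
    using assms(3) that by (intro enc_eq) auto
  have "{u\<in>A \<times> B. (\<lambda>(x,y). f x * b + g y) u = c}
      = {x\<in>A. f x = c div b} \<times> {y\<in>B. g y = c mod b}"
  proof (rule set_eqI)
    fix u show "u \<in> {u\<in>A \<times> B. (\<lambda>(x,y). f x * b + g y) u = c} \<longleftrightarrow>
      u \<in> {x\<in>A. f x = c div b} \<times> {y\<in>B. g y = c mod b}"
      using k[of "snd u" "fst u"] by (cases u) auto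
  qed
  then have e: "card {u\<in>A \<times> B. (\<lambda>(x,y). f x * b + g y) u = c}
      = card {x\<in>A. f x = c div b} * card {y\<in>B. g y = c mod b}"
    by (simp add: card_cartesian_product)
  show "card {u\<in>A \<times> B. (\<lambda>(x,y). f x * b + g y) u = c} = 0 \<or>
        odd (card {u\<in>A \<times> B. (\<lambda>(x,y). f x * b + g y) u = c})"
  proof -
    have "card {x\<in>A. f x = c div b} = 0 \<or> odd (card {x\<in>A. f x = c div b})"
      using assms(1) unfolding oddc_def by blast
    moreover have "card {y\<in>B. g y = c mod b} = 0 \<or> odd (card {y\<in>B. g y = c mod b})"
      using assms(2) unfolding oddc_def by blast
    ultimately show ?thesis unfolding e by auto
  qed
qed

lemma oddc_union:
  assumes "oddc S F" "oddc T F" "\<forall>u\<in>S. \<forall>v\<in>T. F u \<noteq> F v"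
  shows "oddc (S \<union> T) F"
  unfolding oddc_def
proof
  fix c
  show "card {u\<in>S \<union> T. F u = c} = 0 \<or> odd (card {u\<in>S \<union> T. F u = c})"
  proof (cases "{u\<in>S. F u = c} = {}")
    case True
    then have "{u\<in>S \<union> T. F u = c} = {u\<in>T. F u = c}" by auto
    then show ?thesis using assms(2) unfolding oddc_def by metis
  next
    case False
    then have "{u\<in>T. F u = c} = {}" using assms(3) by blast
    then have "{u\<in>S \<union> T. F u = c} = {u\<in>S. F u = c}" by auto
    then show ?thesis using assms(1) unfolding oddc_def by metis
  qed
qed

lemma oddc_insert:
  assumes "oddc S f" "\<forall>y\<in>S. f y \<noteq> f x"
  shows "oddc (insert x S) f"
proof -
  have "oddc ({x} \<union> S) f" using assms oddc_single by (intro oddc_union) auto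
  then show ?thesis by simp
qed

lemma enc_ne:
  fixes b :: nat
  assumes "y1 < b" "y2 < b" "x1 \<noteq> x2 \<or> y1 \<noteq> y2"
  shows "x1 * b + y1 \<noteq> x2 * b + y2"
  using assms enc_eq by metis

lemma prod_oddc:
  assumes "oddc A f" "oddc B g" "oddc C g" "\<forall>x'\<in>A. f x' \<noteq> f x"
    "g ` B \<subseteq> {..<b}" "g ` C \<subseteq> {..<b}"
  shows "oddc (A \<times> B \<union> {x} \<times> C) (\<lambda>(x,y). f x * b + g y)"
proof (rule oddc_union)
  show "oddc (A \<times> B) (\<lambda>(x,y). f x * b + g y)" using assms by (intro oddc_prod) auto
  show "oddc ({x} \<times> C) (\<lambda>(x,y). f x * b + g y)" using assms oddc_single by (intro oddc_prod) auto
  show "\<forall>u\<in>A \<times> B. \<forall>v\<in>{x} \<times> C. (\<lambda>(x,y). f x * b + g y) u \<noteq> (\<lambda>(x,y). f x * b + g y) v"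
  proof (intro ballI)
    fix u v assume u: "u \<in> A \<times> B" and v: "v \<in> {x} \<times> C"
    obtain x1 y1 where 1: "u = (x1,y1)" "x1\<in>A" "y1\<in>B" using u by auto
    obtain y2 where 2: "v = (x,y2)" "y2\<in>C" using v by auto
    have "f x1 \<noteq> f x" using assms(4) 1 by auto
    moreover have "g y1 < b" "g y2 < b" using assms(5,6) 1 2 by auto
    ultimately show "(\<lambda>(x,y). f x * b + g y) u \<noteq> (\<lambda>(x,y). f x * b + g y) v"
      using 1 2 enc_ne by simp
  qed
qed

lemma cone_graph:
  assumes "graph VH EH"
  shows "graph (cone_V VH) (cone_E VH EH)"
  unfolding graph_def
proof (intro conjI allI impI)
  show "finite (cone_V VH)" using assms unfolding graph_def cone_V_def by auto
next
  fix x y assume "cone_E VH EH x y"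
  then show "x \<in> cone_V VH" "y \<in> cone_V VH"
    using assms unfolding graph_def cone_V_def
    by (cases x; cases y; auto)+
next
  fix x y assume "cone_E VH EH x y"
  then show "cone_E VH EH y x" using assms unfolding graph_def by (cases x; cases y; auto)
next
  fix x show "\<not> cone_E VH EH x x" using assms unfolding graph_def by (cases x) auto
qed

lemma cone_col:
  assumes "graph VH EH" "strong_odd_coloring (cone_V VH) (cone_E VH EH) c'"
    "c' ` cone_V VH \<subseteq> {..<k}"
  shows "\<exists>g. g ` VH \<subseteq> {..< k - 1} \<and> (\<forall>u\<in>VH. \<forall>v\<in>VH. EH u v \<longrightarrow> g u \<noteq> g v)
     \<and> (\<forall>h\<in>VH. oddc (nbhd VH EH h) g) \<and> oddc VH g"
proof -
  define c0 where "c0 = c' None"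
  define gg where "gg h = (if c' (Some h) < c0 then c' (Some h) else c' (Some h) - 1)" for h
  define d where "d c = (if c < c0 then c else c + 1)" for c
  have prp: "\<forall>u\<in>cone_V VH. \<forall>v\<in>cone_V VH. cone_E VH EH u v \<longrightarrow> c' u \<noteq> c' v"
    and odc: "\<forall>v\<in>cone_V VH. oddc (nbhd (cone_V VH) (cone_E VH EH) v) c'"
    using assms(2) unfolding soc_iff by auto
  have inN: "None \<in> cone_V VH" unfolding cone_V_def by simp
  have inS: "Some h \<in> cone_V VH" if "h \<in> VH" for h using that unfolding cone_V_def by simp
  have ne: "c' (Some h) \<noteq> c0" if "h \<in> VH" for h
  proof -
    have "cone_E VH EH None (Some h)" using that by simp
    then show ?thesis using prp inN inS[OF that] unfolding c0_def by metis
  qed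
  have key: "gg h = c \<longleftrightarrow> c' (Some h) = d c" if "h \<in> VH" for h c
  proof -
    have "c' (Some h) \<noteq> c0" using ne[OF that] .
    then show ?thesis unfolding gg_def d_def by (cases "c' (Some h) < c0"; cases "c < c0"; simp; arith)
  qed
  have dne: "d c \<noteq> c0" for c by (simp add: d_def)
  have tr: "card {h\<in>S. gg h = c} = card {u \<in> Some ` S. c' u = d c}" if "S \<subseteq> VH" for S c
  proof -
    have "{u \<in> Some ` S. c' u = d c} = Some ` {h\<in>S. gg h = c}"
    proof (rule set_eqI)
      fix u
      show "u \<in> {u \<in> Some ` S. c' u = d c} \<longleftrightarrow> u \<in> Some ` {h\<in>S. gg h = c}"
      proof
        assume "u \<in> {u \<in> Some ` S. c' u = d c}"
        then obtain h where "h \<in> S" "u = Some h" "c' (Some h) = d c" by auto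
        then show "u \<in> Some ` {h\<in>S. gg h = c}" using key[of h c] that by blast
      next
        assume "u \<in> Some ` {h\<in>S. gg h = c}"
        then obtain h where "h \<in> S" "u = Some h" "gg h = c" by auto
        then show "u \<in> {u \<in> Some ` S. c' u = d c}" using key[of h c] that by blast
      qed
    qed
    then show ?thesis by (simp add: card_image)
  qed
  have rng: "gg ` VH \<subseteq> {..< k - 1}"
  proof
    fix z assume "z \<in> gg ` VH"
    then obtain h where h: "h \<in> VH" "z = gg h" by auto
    have "c' (Some h) < k" using assms(3) inS[OF h(1)] by auto
    moreover have "c0 < k" using assms(3) inN unfolding c0_def by auto
    moreover have "c' (Some h) \<noteq> c0" using ne[OF h(1)] .
    ultimately show "z \<in> {..< k - 1}" using h(2) unfolding gg_def
      by (cases "c' (Some h) < c0"; simp; arith)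
  qed
  have pr: "\<forall>u\<in>VH. \<forall>v\<in>VH. EH u v \<longrightarrow> gg u \<noteq> gg v"
  proof (intro ballI impI)
    fix u v assume uv: "u \<in> VH" "v \<in> VH" "EH u v"
    then have "cone_E VH EH (Some u) (Some v)" by simp
    then have "c' (Some u) \<noteq> c' (Some v)" using prp inS[OF uv(1)] inS[OF uv(2)] by blast
    then show "gg u \<noteq> gg v" using key[OF uv(1)] key[OF uv(2)] by metis
  qed
  have on: "oddc (nbhd VH EH h) gg" if h: "h \<in> VH" for h
    unfolding oddc_def
  proof
    fix c
    have nb: "nbhd (cone_V VH) (cone_E VH EH) (Some h) = insert None (Some ` nbhd VH EH h)"
    proof (rule set_eqI)
      fix u show "u \<in> nbhd (cone_V VH) (cone_E VH EH) (Some h) \<longleftrightarrow> u \<in> insert None (Some ` nbhd VH EH h)"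
        using h by (cases u) (auto simp: nbhd_def cone_V_def)
    qed
    have cN: "c' None \<noteq> d c" using dne[of c] c0_def by simp
    have e1: "{u \<in> insert None (Some ` nbhd VH EH h). c' u = d c} = {u \<in> Some ` nbhd VH EH h. c' u = d c}"
      using cN by auto
    have sub: "nbhd VH EH h \<subseteq> VH" unfolding nbhd_def by auto
    have "oddc (nbhd (cone_V VH) (cone_E VH EH) (Some h)) c'"
      using odc inS[OF h] by blast
    then have "card {u \<in> Some ` nbhd VH EH h. c' u = d c} = 0 \<or> odd (card {u \<in> Some ` nbhd VH EH h. c' u = d c})"
      unfolding oddc_def nb e1[symmetric] by blast
    then show "card {u\<in>nbhd VH EH h. gg u = c} = 0 \<or> odd (card {u\<in>nbhd VH EH h. gg u = c})"
      unfolding tr[OF sub] .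
  qed
  have ov: "oddc VH gg"
    unfolding oddc_def
  proof
    fix c
    have nb: "nbhd (cone_V VH) (cone_E VH EH) None = Some ` VH"
    proof (rule set_eqI)
      fix u show "u \<in> nbhd (cone_V VH) (cone_E VH EH) None \<longleftrightarrow> u \<in> Some ` VH"
        by (cases u) (auto simp: nbhd_def cone_V_def)
    qed
    have "oddc (nbhd (cone_V VH) (cone_E VH EH) None) c'"
      using odc inN by blast
    then have "card {u \<in> Some ` VH. c' u = d c} = 0 \<or> odd (card {u \<in> Some ` VH. c' u = d c})"
      unfolding oddc_def nb by blast
    then show "card {u\<in>VH. gg u = c} = 0 \<or> odd (card {u\<in>VH. gg u = c})"
      unfolding tr[OF order_refl] .
  qed
  show ?thesis using rng pr on ov by blast
qed


lemma prod_main: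
  fixes VG :: "'a set" and EG :: "'a \<Rightarrow> 'a \<Rightarrow> bool"
    and VH :: "'b set" and EH :: "'b \<Rightarrow> 'b \<Rightarrow> bool"
    and E :: "'a \<times> 'b \<Rightarrow> 'a \<times> 'b \<Rightarrow> bool"
  assumes fp: "\<forall>u\<in>VG. \<forall>v\<in>VG. EG u v \<longrightarrow> f u \<noteq> f v"
    and fo: "\<forall>x\<in>VG. oddc (nbhd VG EG x) f"
    and fr: "f ` VG \<subseteq> {..<a}"
    and gp: "\<forall>u\<in>VH. \<forall>v\<in>VH. EH u v \<longrightarrow> g u \<noteq> g v"
    and go: "\<forall>y\<in>VH. oddc (nbhd VH EH y) g"
    and gr: "g ` VH \<subseteq> {..<b}"
    and Ep: "\<And>x y x' y'. E (x,y) (x',y') \<Longrightarrow> x \<in> VG \<Longrightarrow> y \<in> VH \<Longrightarrow> x' \<in> VG \<Longrightarrow> y' \<in> VH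
       \<Longrightarrow> f x \<noteq> f x' \<or> g y \<noteq> g y'"
    and Eo: "\<And>x y. x \<in> VG \<Longrightarrow> y \<in> VH \<Longrightarrow> oddc (nbhd (VG \<times> VH) E (x,y)) (\<lambda>(x,y). f x * b + g y)"
  shows "chi_so (VG \<times> VH) E \<le> a * b"
proof (rule chi_le)
  show "(\<lambda>(x,y). f x * b + g y) ` (VG \<times> VH) \<subseteq> {..<a * b}"
  proof
    fix z assume "z \<in> (\<lambda>(x,y). f x * b + g y) ` (VG \<times> VH)"
    then obtain x y where xy: "x \<in> VG" "y \<in> VH" "z = f x * b + g y" by auto
    have "f x < a" "g y < b" using fr gr xy by auto
    then show "z \<in> {..<a * b}" using xy(3) enc_lt by simp
  qed
  show "strong_odd_coloring (VG \<times> VH) E (\<lambda>(x,y). f x * b + g y)"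
    unfolding soc_iff
  proof (intro conjI ballI impI)
    fix u v assume u: "u \<in> VG \<times> VH" and v: "v \<in> VG \<times> VH" and e: "E u v"
    obtain x y where 1: "u = (x,y)" "x \<in> VG" "y \<in> VH" using u by auto
    obtain x' y' where 2: "v = (x',y')" "x' \<in> VG" "y' \<in> VH" using v by auto
    have "E (x,y) (x',y')" using e 1 2 by simp
    then have "f x \<noteq> f x' \<or> g y \<noteq> g y'" using Ep 1 2 by blast
    moreover have "g y < b" "g y' < b" using gr 1 2 by auto
    ultimately show "(\<lambda>(x,y). f x * b + g y) u \<noteq> (\<lambda>(x,y). f x * b + g y) v"
      using 1 2 enc_ne[of "g y" b "g y'" "f x" "f x'"] by simp
  next
    fix v assume "v \<in> VG \<times> VH"
    then obtain x y where "v = (x,y)" "x \<in> VG" "y \<in> VH" by auto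
    then show "oddc (nbhd (VG \<times> VH) E v) (\<lambda>(x,y). f x * b + g y)" using Eo by simp
  qed
qed

theorem theorem4p2:
  fixes VG :: "'a set" and EG :: "'a \<Rightarrow> 'a \<Rightarrow> bool"
    and VH :: "'b set" and EH :: "'b \<Rightarrow> 'b \<Rightarrow> bool"
  assumes "graph VG EG" and "graph VH EH"
  shows "chi_so (VG \<times> VH) (cart_prod_E VG EG VH EH) \<le> chi_so VG EG * chi_so VH EH
    \<and> chi_so (VG \<times> VH) (direct_prod_E VG EG VH EH) \<le> chi_so VG EG * chi_so VH EH
    \<and> chi_so (VG \<times> VH) (strong_prod_E VG EG VH EH) \<le> chi_so VG EG * chi_so VH EH
    \<and> chi_so (VG \<times> VH) (lex_prod_E VG EG VH EH)
           \<le> chi_so VG EG * (chi_so (cone_V VH) (cone_E VH EH) - 1)"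
proof -
  define a where "a = chi_so VG EG"
  define b where "b = chi_so VH EH"
  define k where "k = chi_so (cone_V VH) (cone_E VH EH)"
  obtain f where f: "strong_odd_coloring VG EG f" "f ` VG \<subseteq> {..<a}"
    using chi_ex[OF assms(1)] unfolding a_def by blast
  obtain g where g: "strong_odd_coloring VH EH g" "g ` VH \<subseteq> {..<b}"
    using chi_ex[OF assms(2)] unfolding b_def by blast
  obtain c' where c': "strong_odd_coloring (cone_V VH) (cone_E VH EH) c'" "c' ` cone_V VH \<subseteq> {..<k}"
    using chi_ex[OF cone_graph[OF assms(2)]] unfolding k_def by blast
  obtain gl where gl: "gl ` VH \<subseteq> {..< k - 1}" "\<forall>u\<in>VH. \<forall>v\<in>VH. EH u v \<longrightarrow> gl u \<noteq> gl v"
     "\<forall>h\<in>VH. oddc (nbhd VH EH h) gl" "oddc VH gl"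
    using cone_col[OF assms(2) c'] by blast
  have fp: "\<forall>u\<in>VG. \<forall>v\<in>VG. EG u v \<longrightarrow> f u \<noteq> f v" and fo: "\<forall>x\<in>VG. oddc (nbhd VG EG x) f"
    using f(1) unfolding soc_iff by auto
  have gp: "\<forall>u\<in>VH. \<forall>v\<in>VH. EH u v \<longrightarrow> g u \<noteq> g v" and go: "\<forall>y\<in>VH. oddc (nbhd VH EH y) g"
    using g(1) unfolding soc_iff by auto
  have Gin: "EG x x' \<Longrightarrow> x \<in> VG \<and> x' \<in> VG" for x x' using assms(1) unfolding graph_def by blast
  have Hin: "EH y y' \<Longrightarrow> y \<in> VH \<and> y' \<in> VH" for y y' using assms(2) unfolding graph_def by blast
  have Girr: "\<not> EG x x" for x using assms(1) unfolding graph_def by blast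
  have Hirr: "\<not> EH y y" for y using assms(2) unfolding graph_def by blast
  have fN: "\<forall>x'\<in>nbhd VG EG x. f x' \<noteq> f x" if "x \<in> VG" for x
  proof
    fix z assume "z \<in> nbhd VG EG x" 
    then have "z \<in> VG" "EG x z" unfolding nbhd_def by auto
    then show "f z \<noteq> f x" using fp that by metis
  qed
  have gN: "\<forall>y'\<in>nbhd VH EH y. g y' \<noteq> g y" if "y \<in> VH" for y
  proof
    fix z assume "z \<in> nbhd VH EH y" 
    then have "z \<in> VH" "EH y z" unfolding nbhd_def by auto
    then show "g z \<noteq> g y" using gp that by metis
  qed
  have glN: "\<forall>y'\<in>nbhd VH EH y. gl y' \<noteq> gl y" if "y \<in> VH" for y
  proof
    fix z assume "z \<in> nbhd VH EH y" 
    then have "z \<in> VH" "EH y z" unfolding nbhd_def by auto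
    then show "gl z \<noteq> gl y" using gl(2) that by metis
  qed
  have NG: "nbhd VG EG x \<subseteq> VG" for x unfolding nbhd_def by auto
  have NH: "nbhd VH EH y \<subseteq> VH" for y unfolding nbhd_def by auto
  have gNr: "g ` nbhd VH EH y \<subseteq> {..<b}" for y using g(2) NH by blast
  have glNr: "gl ` nbhd VH EH y \<subseteq> {..<k - 1}" for y using gl(1) NH by blast
  have gIr: "g ` insert y (nbhd VH EH y) \<subseteq> {..<b}" if "y \<in> VH" for y using g(2) NH that by blast
  have c1: "chi_so (VG \<times> VH) (cart_prod_E VG EG VH EH) \<le> a * b"
  proof (rule prod_main[OF fp fo f(2) gp go g(2)])
    fix x y x' y' assume "cart_prod_E VG EG VH EH (x,y) (x',y')" "x \<in> VG" "y \<in> VH" "x' \<in> VG" "y' \<in> VH"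
    then show "f x \<noteq> f x' \<or> g y \<noteq> g y'" using fp gp unfolding cart_prod_E_def by auto
  next
    fix x y assume xy: "x \<in> VG" "y \<in> VH"
    have "nbhd (VG \<times> VH) (cart_prod_E VG EG VH EH) (x,y) = nbhd VG EG x \<times> {y} \<union> {x} \<times> nbhd VH EH y"
      using xy Gin Hin unfolding nbhd_def cart_prod_E_def by auto
    moreover have "oddc (nbhd VG EG x \<times> {y} \<union> {x} \<times> nbhd VH EH y) (\<lambda>(x,y). f x * b + g y)"
      using fo go xy fN[OF xy(1)] g(2) gNr oddc_single by (intro prod_oddc) auto
    ultimately show "oddc (nbhd (VG \<times> VH) (cart_prod_E VG EG VH EH) (x,y)) (\<lambda>(x,y). f x * b + g y)"
      by simp
  qed
  have c2: "chi_so (VG \<times> VH) (direct_prod_E VG EG VH EH) \<le> a * b"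
  proof (rule prod_main[OF fp fo f(2) gp go g(2)])
    fix x y x' y' assume "direct_prod_E VG EG VH EH (x,y) (x',y')" "x \<in> VG" "y \<in> VH" "x' \<in> VG" "y' \<in> VH"
    then show "f x \<noteq> f x' \<or> g y \<noteq> g y'" using fp gp unfolding direct_prod_E_def by auto
  next
    fix x y assume xy: "x \<in> VG" "y \<in> VH"
    have "nbhd (VG \<times> VH) (direct_prod_E VG EG VH EH) (x,y) = nbhd VG EG x \<times> nbhd VH EH y"
      using xy Gin Hin unfolding nbhd_def direct_prod_E_def by auto
    moreover have "oddc (nbhd VG EG x \<times> nbhd VH EH y) (\<lambda>(x,y). f x * b + g y)"
      using fo go xy g(2) gNr by (intro oddc_prod) auto
    ultimately show "oddc (nbhd (VG \<times> VH) (direct_prod_E VG EG VH EH) (x,y)) (\<lambda>(x,y). f x * b + g y)"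
      by simp
  qed
  have c3: "chi_so (VG \<times> VH) (strong_prod_E VG EG VH EH) \<le> a * b"
  proof (rule prod_main[OF fp fo f(2) gp go g(2)])
    fix x y x' y' assume "strong_prod_E VG EG VH EH (x,y) (x',y')" "x \<in> VG" "y \<in> VH" "x' \<in> VG" "y' \<in> VH"
    then show "f x \<noteq> f x' \<or> g y \<noteq> g y'" using fp gp unfolding strong_prod_E_def by auto
  next
    fix x y assume xy: "x \<in> VG" "y \<in> VH"
    have "nbhd (VG \<times> VH) (strong_prod_E VG EG VH EH) (x,y)
        = nbhd VG EG x \<times> insert y (nbhd VH EH y) \<union> {x} \<times> nbhd VH EH y"
      using xy Gin Hin Girr Hirr unfolding nbhd_def strong_prod_E_def by auto
    moreover have "oddc (insert y (nbhd VH EH y)) g"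
      using go xy gN[OF xy(2)] by (intro oddc_insert) auto
    moreover have "oddc (nbhd VG EG x \<times> insert y (nbhd VH EH y) \<union> {x} \<times> nbhd VH EH y) (\<lambda>(x,y). f x * b + g y)"
      using calculation(2) fo go xy fN[OF xy(1)] gIr[OF xy(2)] gNr by (intro prod_oddc) auto
    ultimately show "oddc (nbhd (VG \<times> VH) (strong_prod_E VG EG VH EH) (x,y)) (\<lambda>(x,y). f x * b + g y)"
      by simp
  qed
  have c4: "chi_so (VG \<times> VH) (lex_prod_E VG EG VH EH) \<le> a * (k - 1)"
  proof (rule prod_main[OF fp fo f(2) gl(2) gl(3) gl(1)])
    fix x y x' y' assume "lex_prod_E VG EG VH EH (x,y) (x',y')" "x \<in> VG" "y \<in> VH" "x' \<in> VG" "y' \<in> VH"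
    then show "f x \<noteq> f x' \<or> gl y \<noteq> gl y'" using fp gl(2) unfolding lex_prod_E_def by auto
  next
    fix x y assume xy: "x \<in> VG" "y \<in> VH"
    have "nbhd (VG \<times> VH) (lex_prod_E VG EG VH EH) (x,y) = nbhd VG EG x \<times> VH \<union> {x} \<times> nbhd VH EH y"
      using xy Gin Hin Girr unfolding nbhd_def lex_prod_E_def by auto
    moreover have "oddc (nbhd VG EG x \<times> VH \<union> {x} \<times> nbhd VH EH y) (\<lambda>(x,y). f x * (k - 1) + gl y)"
      using fo gl(3,4) xy fN[OF xy(1)] gl(1) glNr by (intro prod_oddc) auto
    ultimately show "oddc (nbhd (VG \<times> VH) (lex_prod_E VG EG VH EH) (x,y)) (\<lambda>(x,y). f x * (k - 1) + gl y)"
      by simp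
  qed
  show ?thesis using c1 c2 c3 c4 unfolding a_def b_def k_def by blast
qed

end
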